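(* Consider the uncoded caching problem: maximize $G(X)=\sum_{u=1}^U(\omega_{0,u}-\bar D_u)$ over sets $X\subseteq S=\{s_f^h: 1\le f\le F,\ 1\le h\le H\}$ satisfying $|X\cap S_h|\le M$ for all $h=1,\dots,H$, where $S_h=\{s_1^h,\dots,s_F^h\}$ and $X$ corresponds to the placement matrix $x_{f,h}=\mathbf{1}[s_f^h\in X]$, and $$\bar D_u=\sum_{j=1}^{|\mathcal{H}(u)|-1}\omega_{(j)_u,u}\sum_{f=1}^F\Big[\prod_{i=1}^{j-1}(1-x_{f,(i)_u})\Big]x_{f,(j)_u}P_f+\omega_{0,u}\sum_{f=1}^F\Big[\prod_{i=1}^{|\mathcal{H}(u)|-1}(1-x_{f,(i)_u})\Big]P_f.$$ The greedy algorithm, which starts from $X=\emptyset$ and repeatedly adds to $X$ an element $s\in S\setminus X$ with the largest marginal value $G(X\cup\{s\})-G(X)$ among those with $X\cup\{s\}$ still feasible, stopping when no feasible element can be added or the largest marginal value is zero, outputs a feasible $X_{\rm greedy}$ with $G(X_{\rm greedy})\ge \tfrac12\max\{G(X): X \text{ feasible}\}$.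
   Context: Setting: helpers $\{0,1,\dots,H\}$, where helper $0$ is the base station; users $\{1,\dots,U\}$; files $\{1,\dots,F\}$ with request probabilities $P_f\ge0$ summing to $1$; each helper $h\ge1$ has cache capacity $M$ files. A bipartite graph with edge set $\mathcal{E}$ between helpers and users, with $(0,u)\in\mathcal{E}$ for all $u$; $\mathcal{H}(u)=\{h:(h,u)\in\mathcal{E}\}$. Nonnegative reals $\omega_{h,u}$ (per-bit download delays) satisfy $\omega_{0,u}\ge\omega_{h,u}$ for $(h,u)\in\mathcal{E}$, and $\omega_{h,u}=\omega_\infty$ (a constant much larger than $\max_u\omega_{0,u}$) for $(h,u)\notin\mathcal{E}$. $(j)_u$ denotes the helper of $\mathcal{H}(u)$ with the $j$-th smallest delay to $u$, ordered so that $(|\mathcal{H}(u)|)_u=0$. Empty products equal $1$ and empty sums equal $0$. *)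

theory Defs
  imports Main "HOL-Library.FuncSet" Complex_Main
begin

text \<open>Elements s_f^h of the ground set are encoded as pairs (f,h).
  Helpers are naturals 0..H (0 = base station), users 1..U, files 1..F.
  The ordering (j)_u is given by a function ord with ord u j = (j)_u.\<close>

definition Hs :: "(nat \<times> nat) set \<Rightarrow> nat \<Rightarrow> nat set" where
  "Hs E u = {h. (h, u) \<in> E}"

definition Sset :: "nat \<Rightarrow> nat \<Rightarrow> (nat \<times> nat) set" where
  "Sset F H = {1..F} \<times> {1..H}"

definition Sh :: "nat \<Rightarrow> nat \<Rightarrow> (nat \<times> nat) set" where
  "Sh F h = {1..F} \<times> {h}"

definition feasible :: "nat \<Rightarrow> nat \<Rightarrow> nat \<Rightarrow> (nat \<times> nat) set \<Rightarrow> bool" where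
  "feasible F H M X \<longleftrightarrow> X \<subseteq> Sset F H \<and> (\<forall>h\<in>{1..H}. card (X \<inter> Sh F h) \<le> M)"

definition xval :: "(nat \<times> nat) set \<Rightarrow> nat \<Rightarrow> nat \<Rightarrow> real" where
  "xval X f h = (if (f, h) \<in> X then 1 else 0)"

definition Dbar :: "(nat \<times> nat) set \<Rightarrow> nat \<Rightarrow> (nat \<Rightarrow> real) \<Rightarrow> (nat \<Rightarrow> nat \<Rightarrow> real)
    \<Rightarrow> (nat \<Rightarrow> nat \<Rightarrow> nat) \<Rightarrow> (nat \<times> nat) set \<Rightarrow> nat \<Rightarrow> real" where
  "Dbar E F P \<omega> ord X u =
     (\<Sum>j=1..card (Hs E u) - 1. \<omega> (ord u j) u *
        (\<Sum>f=1..F. (\<Prod>i=1..j-1. 1 - xval X f (ord u i)) * xval X f (ord u j) * P f))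
   + \<omega> 0 u * (\<Sum>f=1..F. (\<Prod>i=1..card (Hs E u) - 1. 1 - xval X f (ord u i)) * P f)"

definition Gval :: "nat \<Rightarrow> (nat \<times> nat) set \<Rightarrow> nat \<Rightarrow> (nat \<Rightarrow> real) \<Rightarrow> (nat \<Rightarrow> nat \<Rightarrow> real)
    \<Rightarrow> (nat \<Rightarrow> nat \<Rightarrow> nat) \<Rightarrow> (nat \<times> nat) set \<Rightarrow> real" where
  "Gval U E F P \<omega> ord X = (\<Sum>u=1..U. \<omega> 0 u - Dbar E F P \<omega> ord X u)"

definition cand :: "'a set \<Rightarrow> ('a set \<Rightarrow> bool) \<Rightarrow> 'a set \<Rightarrow> 'a set" where
  "cand S feas X = {s \<in> S - X. feas (insert s X)}"

definition gain :: "('a set \<Rightarrow> real) \<Rightarrow> 'a set \<Rightarrow> 'a \<Rightarrow> real" where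
  "gain G X s = G (insert s X) - G X"

definition maxgain :: "'a set \<Rightarrow> ('a set \<Rightarrow> bool) \<Rightarrow> ('a set \<Rightarrow> real) \<Rightarrow> 'a set \<Rightarrow> real" where
  "maxgain S feas G X = Max (gain G X ` cand S feas X)"

definition greedy_stop :: "'a set \<Rightarrow> ('a set \<Rightarrow> bool) \<Rightarrow> ('a set \<Rightarrow> real) \<Rightarrow> 'a set \<Rightarrow> bool" where
  "greedy_stop S feas G X \<longleftrightarrow> cand S feas X = {} \<or> maxgain S feas G X = 0"

text \<open>States reachable by some run of the greedy algorithm (any tie-breaking).\<close>
inductive greedy_reach :: "'a set \<Rightarrow> ('a set \<Rightarrow> bool) \<Rightarrow> ('a set \<Rightarrow> real) \<Rightarrow> 'a set \<Rightarrow> bool"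
  for S feas G where
  start: "greedy_reach S feas G {}"
| step: "greedy_reach S feas G X \<Longrightarrow> \<not> greedy_stop S feas G X \<Longrightarrow> s \<in> cand S feas X
         \<Longrightarrow> gain G X s = maxgain S feas G X \<Longrightarrow> greedy_reach S feas G (insert s X)"

definition greedy_output :: "'a set \<Rightarrow> ('a set \<Rightarrow> bool) \<Rightarrow> ('a set \<Rightarrow> real) \<Rightarrow> 'a set \<Rightarrow> bool" where
  "greedy_output S feas G X \<longleftrightarrow> greedy_reach S feas G X \<and> greedy_stop S feas G X"

end

theory Submission imports Defs begin


lemma finite_Sset: "finite (Sset F H)" unfolding Sset_def by simp

lemma Sh_card_insert_le:
  assumes "s \<in> Sh F hs" "s \<notin> X" "z \<in> Sh F hs" "finite X"
  shows "card (insert z X \<inter> Sh F h) \<le> card (insert s X \<inter> Sh F h)"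
proof (cases "z \<in> Sh F h")
  case True
  then have "h = hs" using assms(3) unfolding Sh_def by auto
  then have "card (insert s X \<inter> Sh F h) = card (X \<inter> Sh F h) + 1"
    using assms by (simp add: Int_insert_left)
  moreover have "card (insert z X \<inter> Sh F h) \<le> card (X \<inter> Sh F h) + 1"
    using assms(4) by (simp add: Int_insert_left card_insert_le_m1 card_insert_if)
  ultimately show ?thesis by linarith
next
  case False
  then have "insert z X \<inter> Sh F h = X \<inter> Sh F h" by auto
  moreover have "X \<inter> Sh F h \<subseteq> insert s X \<inter> Sh F h" by auto
  moreover have "finite (insert s X \<inter> Sh F h)" using assms(4) by simp
  ultimately show ?thesis by (simp add: card_mono)
qed

lemma greedy_inv:
  fixes G :: "(nat \<times> nat) set \<Rightarrow> real"
  assumes mono: "\<And>A B. A \<subseteq> B \<Longrightarrow> B \<subseteq> Sset F H \<Longrightarrow> G A \<le> G B"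
    and sub: "\<And>A B e. A \<subseteq> B \<Longrightarrow> B \<subseteq> Sset F H \<Longrightarrow> gain G B e \<le> gain G A e"
  assumes "greedy_reach (Sset F H) (feasible F H M) G X"
  shows "feasible F H M X \<and> (\<forall>Z. Z \<subseteq> Sset F H - X \<longrightarrow>
     (\<forall>h\<in>{1..H}. card (Z \<inter> Sh F h) \<le> card (X \<inter> Sh F h)) \<longrightarrow>
     (\<Sum>z\<in>Z. gain G X z) \<le> G X - G {})"
  using assms(3)
proof (induction rule: greedy_reach.induct)
  case start
  have "feasible F H M {}" unfolding feasible_def by simp
  moreover have "Z = {}" if ZZ: "Z \<subseteq> Sset F H" "\<forall>h\<in>{1..H}. card (Z \<inter> Sh F h) \<le> card ({} \<inter> Sh F h)" for Z
  proof -
    have fz: "finite Z" using that(1) finite_Sset finite_subset by blast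
    show ?thesis
    proof (rule ccontr)
      assume "Z \<noteq> {}"
      then obtain z where z: "z \<in> Z" by blast
      then obtain f h where "z = (f,h)" "f \<in> {1..F}" "h \<in> {1..H}" using ZZ(1) z unfolding Sset_def by auto
      then have "z \<in> Z \<inter> Sh F h" using z unfolding Sh_def by auto
      then have "card (Z \<inter> Sh F h) > 0" using fz by (metis card_gt_0_iff empty_iff finite_Int)
      then show False using ZZ(2) \<open>h \<in> {1..H}\<close> by auto
    qed
  qed
  ultimately show ?case by (metis Diff_empty order.refl diff_self sum.empty)
next
  case (step X s)
  have sX: "s \<in> Sset F H - X" and feasX': "feasible F H M (insert s X)"
    using step.hyps(3) unfolding cand_def by auto
  have feasX: "feasible F H M X" using step.IH by blast
  have XS: "X \<subseteq> Sset F H" using feasX unfolding feasible_def by blast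
  have X'S: "insert s X \<subseteq> Sset F H" using feasX' unfolding feasible_def by blast
  have finX: "finite X" using XS finite_Sset finite_subset by blast
  obtain fs hs where s: "s = (fs, hs)" "hs \<in> {1..H}" "fs \<in> {1..F}" using sX unfolding Sset_def by auto
  have sSh: "s \<in> Sh F hs" using s unfolding Sh_def by auto
  have candfin: "finite (cand (Sset F H) (feasible F H M) X)"
    unfolding cand_def using finite_Sset by simp
  have gz: "gain G X z \<le> gain G X s" if "z \<in> Sset F H - X" "z \<in> Sh F hs" for z
  proof -
    have "feasible F H M (insert z X)"
      unfolding feasible_def
    proof
      show "insert z X \<subseteq> Sset F H" using that XS by auto
      show "\<forall>h\<in>{1..H}. card (insert z X \<inter> Sh F h) \<le> M"
      proof
        fix h assume h: "h \<in> {1..H}"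
        have "card (insert z X \<inter> Sh F h) \<le> card (insert s X \<inter> Sh F h)"
          using Sh_card_insert_le[OF sSh _ that(2) finX] sX by blast
        also have "\<dots> \<le> M" using feasX' h unfolding feasible_def by blast
        finally show "card (insert z X \<inter> Sh F h) \<le> M" .
      qed
    qed
    then have "z \<in> cand (Sset F H) (feasible F H M) X" using that unfolding cand_def by auto
    then have "gain G X z \<le> maxgain (Sset F H) (feasible F H M) G X"
      unfolding maxgain_def using candfin by simp
    then show ?thesis using step.hyps(4) by simp
  qed
  have subX: "gain G (insert s X) z \<le> gain G X z" for z
    using sub[of X "insert s X" z] X'S by auto
  have monoX: "G X \<le> G (insert s X)" using mono[of X "insert s X"] X'S by auto
  have cardo: "card (Z \<inter> Sh F h) \<le> card (X \<inter> Sh F h)"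
    if "h \<in> {1..H}" "h \<noteq> hs" "card (Z \<inter> Sh F h) \<le> card (insert s X \<inter> Sh F h)" for Z h
  proof -
    have "s \<notin> Sh F h" using s that(2) unfolding Sh_def by auto
    then have "insert s X \<inter> Sh F h = X \<inter> Sh F h" by auto
    then show ?thesis using that(3) by simp
  qed
  have "(\<Sum>z\<in>Z. gain G (insert s X) z) \<le> G (insert s X) - G {}"
    if Z: "Z \<subseteq> Sset F H - insert s X"
      "\<forall>h\<in>{1..H}. card (Z \<inter> Sh F h) \<le> card (insert s X \<inter> Sh F h)" for Z
  proof -
    have finZ: "finite Z" using Z(1) finite_Sset finite_subset by blast
    show ?thesis
    proof (cases "Z \<inter> Sh F hs = {}")
      case True
      have "\<forall>h\<in>{1..H}. card (Z \<inter> Sh F h) \<le> card (X \<inter> Sh F h)"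
        using cardo Z(2) True by (metis card.empty le0)
      moreover have "Z \<subseteq> Sset F H - X" using Z(1) by auto
      ultimately have "(\<Sum>z\<in>Z. gain G X z) \<le> G X - G {}" using step.IH by blast
      moreover have "(\<Sum>z\<in>Z. gain G (insert s X) z) \<le> (\<Sum>z\<in>Z. gain G X z)"
        by (rule sum_mono) (rule subX)
      ultimately show ?thesis using monoX by linarith
    next
      case False
      then obtain z0 where z0: "z0 \<in> Z" "z0 \<in> Sh F hs" by blast
      define Z0 where "Z0 = Z - {z0}"
      have "\<forall>h\<in>{1..H}. card (Z0 \<inter> Sh F h) \<le> card (X \<inter> Sh F h)"
      proof
        fix h assume h: "h \<in> {1..H}"
        show "card (Z0 \<inter> Sh F h) \<le> card (X \<inter> Sh F h)"
        proof (cases "h = hs")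
          case True
          have "card (Z0 \<inter> Sh F h) = card (Z \<inter> Sh F h) - 1"
          proof -
            have "Z0 \<inter> Sh F h = (Z \<inter> Sh F h) - {z0}" unfolding Z0_def by auto
            then show ?thesis using z0 True finZ by (simp add: card_Diff_singleton)
          qed
          moreover have "card (insert s X \<inter> Sh F h) = card (X \<inter> Sh F h) + 1"
            using True sSh sX finX by (simp add: Int_insert_left)
          ultimately show ?thesis using Z(2) h by fastforce
        next
          case False
          have "card (Z0 \<inter> Sh F h) \<le> card (Z \<inter> Sh F h)"
            unfolding Z0_def using finZ by (intro card_mono) auto
          then show ?thesis using cardo[OF h False] Z(2) h by fastforce
        qed
      qed
      moreover have "Z0 \<subseteq> Sset F H - X" using Z(1) unfolding Z0_def by auto
      ultimately have IH: "(\<Sum>z\<in>Z0. gain G X z) \<le> G X - G {}" using step.IH by blast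
      have "(\<Sum>z\<in>Z. gain G (insert s X) z) = gain G (insert s X) z0 + (\<Sum>z\<in>Z0. gain G (insert s X) z)"
        unfolding Z0_def using finZ z0 by (simp add: sum.remove)
      also have "\<dots> \<le> gain G X s + (\<Sum>z\<in>Z0. gain G X z)"
      proof (rule add_mono)
        have "z0 \<in> Sset F H - X" using Z(1) z0 by auto
        then show "gain G (insert s X) z0 \<le> gain G X s" using subX[of z0] gz[of z0] z0 by linarith
        show "(\<Sum>z\<in>Z0. gain G (insert s X) z) \<le> (\<Sum>z\<in>Z0. gain G X z)"
          by (rule sum_mono) (rule subX)
      qed
      also have "\<dots> \<le> G (insert s X) - G {}" using IH unfolding gain_def by linarith
      finally show ?thesis .
    qed
  qed
  then show ?case using feasX' by blast
qed


definition mx :: "('b \<Rightarrow> real) \<Rightarrow> 'b set \<Rightarrow> real" where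
  "mx a X = Max (insert 0 (a ` X))"

lemma mx_empty: "mx a {} = 0" unfolding mx_def by simp

lemma mx_insert: "finite X \<Longrightarrow> mx a (insert e X) = max (a e) (mx a X)"
proof -
  assume fX: "finite X"
  have "insert 0 (a ` insert e X) = insert (a e) (insert 0 (a ` X))" by auto
  then show ?thesis unfolding mx_def using fX
    by (metis Max_insert finite_imageI finite_insert insert_not_empty)
qed

lemma mx_mono: "finite B \<Longrightarrow> A \<subseteq> B \<Longrightarrow> mx a A \<le> mx a B"
  unfolding mx_def by (rule Max_mono) auto

lemma mx_sub: "finite B \<Longrightarrow> A \<subseteq> B \<Longrightarrow>
   mx a (insert e B) - mx a B \<le> mx a (insert e A) - mx a A"
proof -
  assume fB: "finite B" and AB: "A \<subseteq> B"
  have fA: "finite A" using fB AB finite_subset by blast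
  have "mx a A \<le> mx a B" using mx_mono[OF fB AB] .
  then show ?thesis using mx_insert[OF fB] mx_insert[OF fA] by (simp add: max_def)
qed

lemma prod_ind:
  fixes n :: nat and b :: "nat \<Rightarrow> bool"
  shows "(\<Prod>i=1..n. 1 - (if b i then 1 else 0::real)) = (if \<exists>i\<in>{1..n}. b i then 0 else 1)"
proof (induction n)
  case (Suc n)
  have "(\<exists>i\<in>{1..Suc n}. b i) = ((\<exists>i\<in>{1..n}. b i) \<or> b (Suc n))"
  proof
    assume "\<exists>i\<in>{1..Suc n}. b i"
    then obtain i where "i \<in> {1..Suc n}" "b i" by blast
    then show "(\<exists>i\<in>{1..n}. b i) \<or> b (Suc n)" by (cases "i = Suc n") auto
  next
    assume "(\<exists>i\<in>{1..n}. b i) \<or> b (Suc n)"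
    then show "\<exists>i\<in>{1..Suc n}. b i"
    proof
      assume "b (Suc n)" then show ?thesis by (intro bexI[where x="Suc n"]) auto
    qed auto
  qed
  then show ?case using Suc by simp
qed simp

lemma value_formula:
  fixes w :: "nat \<Rightarrow> real" and w0 :: real and b :: "nat \<Rightarrow> bool"
  assumes "\<forall>i j. 1 \<le> i \<longrightarrow> i \<le> j \<longrightarrow> j \<le> n \<longrightarrow> w i \<le> w j"
    and "\<forall>j\<in>{1..n}. w j \<le> w0"
  shows "(\<Sum>j=1..n. w j * ((\<Prod>i=1..j-1. 1 - (if b i then 1 else 0)) * (if b j then 1 else 0)))
     + w0 * (\<Prod>i=1..n. 1 - (if b i then 1 else 0))
   = w0 - Max (insert 0 ((\<lambda>j. w0 - w j) ` {j\<in>{1..n}. b j}))"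
  using assms
proof (induction n)
  case 0
  then show ?case by simp
next
  case (Suc n)
  let ?x = "\<lambda>i. (if b i then 1 else 0::real)"
  let ?L = "\<lambda>n. (\<Sum>j=1..n. w j * ((\<Prod>i=1..j-1. 1 - ?x i) * ?x j)) + w0 * (\<Prod>i=1..n. 1 - ?x i)"
  let ?A = "\<lambda>n. {j\<in>{1..n}. b j}"
  let ?g = "\<lambda>j. w0 - w j"
  have IH: "?L n = w0 - Max (insert 0 (?g ` ?A n))"
    using Suc.IH Suc.prems by auto
  have LS: "?L (Suc n) = ?L n + (\<Prod>i=1..n. 1 - ?x i) * ?x (Suc n) * (w (Suc n) - w0)"
    by (simp add: algebra_simps)
  show ?case
  proof (cases "b (Suc n)")
    case False
    have "?A (Suc n) = ?A n" using False by (auto simp: le_Suc_eq)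
    then show ?thesis using LS IH False by simp
  next
    case True
    have AS: "?A (Suc n) = insert (Suc n) (?A n)" using True by (auto simp: le_Suc_eq)
    show ?thesis
    proof (cases "\<exists>i\<in>{1..n}. b i")
      case True
      then obtain i where i: "i \<in> {1..n}" "b i" by blast
      have "w i \<le> w (Suc n)" using Suc.prems(1) i by auto
      moreover have "?g i \<le> Max (insert 0 (?g ` ?A n))"
        using i by (intro Max_ge) auto
      ultimately have "?g (Suc n) \<le> Max (insert 0 (?g ` ?A n))" by linarith
      moreover have "insert 0 (?g ` ?A (Suc n)) = insert (?g (Suc n)) (insert 0 (?g ` ?A n))"
        using AS by auto
      moreover have "Max (insert (?g (Suc n)) (insert 0 (?g ` ?A n)))
          = max (?g (Suc n)) (Max (insert 0 (?g ` ?A n)))"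
        by (rule Max_insert) auto
      ultimately have "Max (insert 0 (?g ` ?A (Suc n))) = Max (insert 0 (?g ` ?A n))"
        by (simp add: max_absorb2)
      have P0: "(\<Prod>i=1..n. 1 - ?x i) = 0" using True prod_ind[where n=n and b=b] by simp
      have "?L (Suc n) = ?L n" using LS unfolding P0 by simp
      with IH \<open>Max (insert 0 (?g ` ?A (Suc n))) = Max (insert 0 (?g ` ?A n))\<close>
      show ?thesis by simp
    next
      case False
      have "?A n = {}" using False by auto
      moreover have "w (Suc n) \<le> w0" using Suc.prems(2) by auto
      moreover have P1: "(\<Prod>i=1..n. 1 - ?x i) = 1" using False prod_ind[where n=n and b=b] by simp
      ultimately have "?L (Suc n) = w (Suc n)" using LS IH \<open>b (Suc n)\<close> unfolding P1 by simp
      moreover have "insert 0 (?g ` ?A (Suc n)) = {0, ?g (Suc n)}" using AS \<open>?A n = {}\<close> by auto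
      ultimately show ?thesis using \<open>w (Suc n) \<le> w0\<close> by (simp add: max_def)
    qed
  qed
qed


definition aw :: "(nat \<times> nat) set \<Rightarrow> (nat \<Rightarrow> nat \<Rightarrow> real) \<Rightarrow> nat \<Rightarrow> nat \<Rightarrow> nat \<times> nat \<Rightarrow> real" where
  "aw E \<omega> u f = (\<lambda>(f', h). if f' = f \<and> h \<in> Hs E u \<and> h \<noteq> 0 then \<omega> 0 u - \<omega> h u else 0)"

lemma C_eq:
  fixes \<omega> :: "nat \<Rightarrow> nat \<Rightarrow> real"
  assumes fin: "finite (Hs E u)" and z: "0 \<in> Hs E u"
    and bij: "bij_betw (ord u) {1..card (Hs E u)} (Hs E u)"
    and sorted: "\<forall>i\<in>{1..card (Hs E u)}. \<forall>j\<in>{1..card (Hs E u)}.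
                        i \<le> j \<longrightarrow> \<omega> (ord u i) u \<le> \<omega> (ord u j) u"
    and last: "ord u (card (Hs E u)) = 0"
    and fX: "finite X"
  shows "(\<Sum>j=1..card (Hs E u) - 1. \<omega> (ord u j) u *
            ((\<Prod>i=1..j-1. 1 - xval X f (ord u i)) * xval X f (ord u j)))
        + \<omega> 0 u * (\<Prod>i=1..card (Hs E u) - 1. 1 - xval X f (ord u i))
       = \<omega> 0 u - mx (aw E \<omega> u f) X"
proof -
  define n where "n = card (Hs E u)"
  have n1: "n \<ge> 1" using fin z unfolding n_def by (metis One_nat_def Suc_leI card_gt_0_iff empty_iff)
  have img: "ord u ` {1..n} = Hs E u" using bij unfolding n_def bij_betw_def by blast
  have inj: "inj_on (ord u) {1..n}" using bij unfolding n_def bij_betw_def by blast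
  let ?b = "\<lambda>j. (f, ord u j) \<in> X"
  let ?w = "\<lambda>j. \<omega> (ord u j) u"
  have xv: "xval X f (ord u j) = (if ?b j then 1 else 0)" for j unfolding xval_def by simp
  have s1: "\<forall>i j. 1 \<le> i \<longrightarrow> i \<le> j \<longrightarrow> j \<le> n - 1 \<longrightarrow> ?w i \<le> ?w j"
    using sorted unfolding n_def by auto
  have s2: "\<forall>j\<in>{1..n-1}. ?w j \<le> \<omega> 0 u"
  proof
    fix j assume "j \<in> {1..n-1}"
    then have "?w j \<le> ?w n" using sorted n1 unfolding n_def by auto
    then show "?w j \<le> \<omega> 0 u" using last unfolding n_def by simp
  qed
  have VF: "(\<Sum>j=1..n-1. ?w j * ((\<Prod>i=1..j-1. 1 - (if ?b i then 1 else 0)) * (if ?b j then 1 else 0)))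
     + \<omega> 0 u * (\<Prod>i=1..n-1. 1 - (if ?b i then 1 else 0))
   = \<omega> 0 u - Max (insert 0 ((\<lambda>j. \<omega> 0 u - ?w j) ` {j\<in>{1..n-1}. ?b j}))"
    by (rule value_formula[OF s1 s2])
  have ne0: "ord u j \<noteq> 0" if "j \<in> {1..n-1}" for j
  proof
    assume "ord u j = 0"
    then have "ord u j = ord u n" using last unfolding n_def by simp
    moreover have "j \<in> {1..n}" "n \<in> {1..n}" using that n1 by auto
    ultimately have "j = n" using inj by (meson inj_onD)
    then show False using that n1 by auto
  qed
  have seteq: "insert 0 ((\<lambda>j. \<omega> 0 u - ?w j) ` {j\<in>{1..n-1}. ?b j}) = insert 0 (aw E \<omega> u f ` X)"
  proof (rule set_eqI, rule iffI)
    fix y assume "y \<in> insert 0 ((\<lambda>j. \<omega> 0 u - ?w j) ` {j\<in>{1..n-1}. ?b j})"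
    then consider "y = 0" | j where "j \<in> {1..n-1}" "?b j" "y = \<omega> 0 u - ?w j" by blast
    then show "y \<in> insert 0 (aw E \<omega> u f ` X)"
    proof cases
      case 2
      have "ord u j \<in> Hs E u" using img 2(1) by auto
      then have "aw E \<omega> u f (f, ord u j) = y" using 2 ne0[OF 2(1)] unfolding aw_def by simp
      then show ?thesis using 2(2) by (metis image_eqI insertI2)
    qed simp
  next
    fix y assume "y \<in> insert 0 (aw E \<omega> u f ` X)"
    then consider "y = 0" | f' h where "(f', h) \<in> X" "y = aw E \<omega> u f (f', h)" by auto
    then show "y \<in> insert 0 ((\<lambda>j. \<omega> 0 u - ?w j) ` {j\<in>{1..n-1}. ?b j})"
    proof cases
      case 2
      show ?thesis
      proof (cases "f' = f \<and> h \<in> Hs E u \<and> h \<noteq> 0")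
        case True
        then have "h \<in> ord u ` {1..n}" using img by simp
        then obtain j where j: "j \<in> {1..n}" "h = ord u j" by blast
        have "j \<noteq> n" using j True last unfolding n_def by auto
        then have "j \<in> {1..n-1}" using j by auto
        moreover have "?b j" using 2(1) True j by simp
        moreover have "y = \<omega> 0 u - ?w j" using 2(2) True j unfolding aw_def by simp
        ultimately show ?thesis by blast
      next
        case False
        then show ?thesis using 2(2) unfolding aw_def by auto
      qed
    qed simp
  qed
  show ?thesis using VF unfolding xv n_def[symmetric] mx_def seteq[symmetric] by simp
qed


lemma Dbar_rearr:
  "Dbar E F P \<omega> ord X u = (\<Sum>f=1..F. P f *
     ((\<Sum>j=1..card (Hs E u) - 1. \<omega> (ord u j) u *
            ((\<Prod>i=1..j-1. 1 - xval X f (ord u i)) * xval X f (ord u j)))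
        + \<omega> 0 u * (\<Prod>i=1..card (Hs E u) - 1. 1 - xval X f (ord u i))))"
proof -
  let ?K = "card (Hs E u) - 1"
  let ?A = "\<lambda>j f. (\<Prod>i=1..j-1. 1 - xval X f (ord u i)) * xval X f (ord u j)"
  let ?B = "\<lambda>f. (\<Prod>i=1..?K. 1 - xval X f (ord u i))"
  have "Dbar E F P \<omega> ord X u = (\<Sum>j=1..?K. \<omega> (ord u j) u * (\<Sum>f=1..F. ?A j f * P f))
      + \<omega> 0 u * (\<Sum>f=1..F. ?B f * P f)" unfolding Dbar_def by simp
  also have "\<dots> = (\<Sum>j=1..?K. \<Sum>f=1..F. P f * (\<omega> (ord u j) u * ?A j f))
      + (\<Sum>f=1..F. P f * (\<omega> 0 u * ?B f))"
  proof -
    have e1: "\<omega> (ord u j) u * (\<Sum>f=1..F. ?A j f * P f) = (\<Sum>f=1..F. P f * (\<omega> (ord u j) u * ?A j f))" for j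
      unfolding sum_distrib_left by (rule sum.cong[OF refl]) (simp only: mult_ac)
    have e2: "\<omega> 0 u * (\<Sum>f=1..F. ?B f * P f) = (\<Sum>f=1..F. P f * (\<omega> 0 u * ?B f))"
      unfolding sum_distrib_left by (rule sum.cong[OF refl]) (simp only: mult_ac)
    show ?thesis unfolding e1 e2 ..
  qed
  also have "\<dots> = (\<Sum>f=1..F. \<Sum>j=1..?K. P f * (\<omega> (ord u j) u * ?A j f))
      + (\<Sum>f=1..F. P f * (\<omega> 0 u * ?B f))"
    by (subst sum.swap) (rule refl)
  also have "\<dots> = (\<Sum>f=1..F. P f * ((\<Sum>j=1..?K. \<omega> (ord u j) u * ?A j f) + \<omega> 0 u * ?B f))"
    unfolding sum.distrib[symmetric]
    by (rule sum.cong[OF refl]) (simp only: distrib_left sum_distrib_left)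
  finally show ?thesis .
qed

lemma Gval_eq:
  fixes \<omega> :: "nat \<Rightarrow> nat \<Rightarrow> real"
  assumes P_sum: "(\<Sum>f=1..F. P f) = 1"
    and E_sub: "E \<subseteq> {0..H} \<times> {1..U}"
    and E_base: "\<forall>u\<in>{1..U}. (0, u) \<in> E"
    and ord_bij: "\<forall>u\<in>{1..U}. bij_betw (ord u) {1..card (Hs E u)} (Hs E u)"
    and ord_sorted: "\<forall>u\<in>{1..U}. \<forall>i\<in>{1..card (Hs E u)}. \<forall>j\<in>{1..card (Hs E u)}.
                        i \<le> j \<longrightarrow> \<omega> (ord u i) u \<le> \<omega> (ord u j) u"
    and ord_last: "\<forall>u\<in>{1..U}. ord u (card (Hs E u)) = 0"
    and fX: "finite X"
  shows "Gval U E F P \<omega> ord X = (\<Sum>u=1..U. \<Sum>f=1..F. P f * mx (aw E \<omega> u f) X)"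
  unfolding Gval_def
proof (rule sum.cong[OF refl])
  fix u assume u: "u \<in> {1..U}"
  have fin: "finite (Hs E u)"
  proof -
    have "Hs E u \<subseteq> {0..H}" using E_sub unfolding Hs_def by auto
    then show ?thesis using finite_subset by blast
  qed
  have z: "0 \<in> Hs E u" using E_base u unfolding Hs_def by auto
  have C: "f \<in> {1..F} \<Longrightarrow> (\<Sum>j=1..card (Hs E u) - 1. \<omega> (ord u j) u *
            ((\<Prod>i=1..j-1. 1 - xval X f (ord u i)) * xval X f (ord u j)))
        + \<omega> 0 u * (\<Prod>i=1..card (Hs E u) - 1. 1 - xval X f (ord u i))
       = \<omega> 0 u - mx (aw E \<omega> u f) X" for f
    using C_eq[where ord=ord and u=u and E=E and \<omega>=\<omega> and X=X and f=f, OF fin z bspec[OF ord_bij u] bspec[OF ord_sorted u] bspec[OF ord_last u] fX] .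
  have "Dbar E F P \<omega> ord X u = (\<Sum>f=1..F. P f * (\<omega> 0 u - mx (aw E \<omega> u f) X))"
    unfolding Dbar_rearr using C by (intro sum.cong) auto
  also have "\<dots> = (\<Sum>f=1..F. \<omega> 0 u * P f) - (\<Sum>f=1..F. P f * mx (aw E \<omega> u f) X)"
    unfolding sum_subtractf[symmetric] by (rule sum.cong[OF refl]) (simp only: right_diff_distrib mult.commute)
  also have "\<dots> = \<omega> 0 u * (\<Sum>f=1..F. P f) - (\<Sum>f=1..F. P f * mx (aw E \<omega> u f) X)"
    by (simp only: sum_distrib_left)
  finally show "\<omega> 0 u - Dbar E F P \<omega> ord X u = (\<Sum>f=1..F. P f * mx (aw E \<omega> u f) X)"
    using P_sum by simp
qed


lemma subadd:
  fixes G :: "(nat \<times> nat) set \<Rightarrow> real"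
  assumes sub: "\<And>A B e. A \<subseteq> B \<Longrightarrow> B \<subseteq> Sset F H \<Longrightarrow> gain G B e \<le> gain G A e"
    and A: "A \<subseteq> Sset F H" and fZ: "finite Z" and Z: "Z \<subseteq> Sset F H"
  shows "G (A \<union> Z) \<le> G A + (\<Sum>z\<in>Z. gain G A z)"
  using fZ Z
proof (induction Z rule: finite_induct)
  case empty then show ?case by simp
next
  case (insert z Z)
  have "G (A \<union> insert z Z) = G (A \<union> Z) + gain G (A \<union> Z) z"
    unfolding gain_def by simp
  also have "gain G (A \<union> Z) z \<le> gain G A z" using sub[of A "A \<union> Z" z] A insert.prems by auto
  finally show ?case using insert by simp
qed

lemma greedy_exists:
  fixes G :: "(nat \<times> nat) set \<Rightarrow> real"
  assumes "greedy_reach (Sset F H) (feasible F H M) G X" "X \<subseteq> Sset F H"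
  shows "\<exists>Y. greedy_output (Sset F H) (feasible F H M) G Y"
  using assms
proof (induction "card (Sset F H - X)" arbitrary: X rule: less_induct)
  case less
  show ?case
  proof (cases "greedy_stop (Sset F H) (feasible F H M) G X")
    case True
    then show ?thesis using less.prems unfolding greedy_output_def by blast
  next
    case False
    let ?C = "cand (Sset F H) (feasible F H M) X"
    have Cne: "?C \<noteq> {}" using False unfolding greedy_stop_def by blast
    have Cfin: "finite ?C" unfolding cand_def using finite_Sset by simp
    have "Max (gain G X ` ?C) \<in> gain G X ` ?C" using Cne Cfin by (intro Max_in) auto
    then obtain s where s: "s \<in> ?C" "gain G X s = maxgain (Sset F H) (feasible F H M) G X"
      unfolding maxgain_def by auto
    have R: "greedy_reach (Sset F H) (feasible F H M) G (insert s X)"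
      using greedy_reach.step[OF less.prems(1) False s] .
    have sS: "s \<in> Sset F H - X" using s(1) unfolding cand_def by auto
    have "card (Sset F H - insert s X) < card (Sset F H - X)"
      using sS finite_Sset by (metis Diff_insert card_Diff1_less finite_Diff)
    moreover have "insert s X \<subseteq> Sset F H" using sS less.prems(2) by auto
    ultimately show ?thesis using less.hyps R by blast
  qed
qed

lemma greedy_half:
  fixes G :: "(nat \<times> nat) set \<Rightarrow> real"
  assumes mono: "\<And>A B. A \<subseteq> B \<Longrightarrow> B \<subseteq> Sset F H \<Longrightarrow> G A \<le> G B"
    and sub: "\<And>A B e. A \<subseteq> B \<Longrightarrow> B \<subseteq> Sset F H \<Longrightarrow> gain G B e \<le> gain G A e"
    and G0: "G {} = 0"
  shows "(\<exists>X. greedy_output (Sset F H) (feasible F H M) G X)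
       \<and> (\<forall>X. greedy_output (Sset F H) (feasible F H M) G X \<longrightarrow>
            feasible F H M X \<and> G X \<ge> 1/2 * Max (G ` {Y. feasible F H M Y}))"
proof
  show "\<exists>X. greedy_output (Sset F H) (feasible F H M) G X"
    using greedy_exists[OF greedy_reach.start] by blast
next
  show "\<forall>X. greedy_output (Sset F H) (feasible F H M) G X \<longrightarrow>
            feasible F H M X \<and> G X \<ge> 1/2 * Max (G ` {Y. feasible F H M Y})"
  proof (intro allI impI)
    fix X assume out: "greedy_output (Sset F H) (feasible F H M) G X"
    have R: "greedy_reach (Sset F H) (feasible F H M) G X" and St: "greedy_stop (Sset F H) (feasible F H M) G X"
      using out unfolding greedy_output_def by auto
    note inv = greedy_inv[OF mono sub R]
    have feasX: "feasible F H M X" using inv by blast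
    have XS: "X \<subseteq> Sset F H" using feasX unfolding feasible_def by blast
    have finX: "finite X" using XS finite_Sset finite_subset by blast
    have bound: "G Opt \<le> 2 * G X" if feasOpt: "feasible F H M Opt" for Opt
    proof -
      have OptS: "Opt \<subseteq> Sset F H" using feasOpt unfolding feasible_def by blast
      define Z1 where "Z1 = {q \<in> Opt - X. \<not> feasible F H M (insert q X)}"
      define Z2 where "Z2 = {q \<in> Opt - X. feasible F H M (insert q X)}"
      have finOpt: "finite Opt" using OptS finite_Sset finite_subset by blast
      have U: "Opt - X = Z1 \<union> Z2" "Z1 \<inter> Z2 = {}" unfolding Z1_def Z2_def by auto
      have fZ1: "finite Z1" "finite Z2" unfolding Z1_def Z2_def using finOpt by auto
      have Z1S: "Z1 \<subseteq> Sset F H - X" unfolding Z1_def using OptS by auto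
      have cZ1: "\<forall>h\<in>{1..H}. card (Z1 \<inter> Sh F h) \<le> card (X \<inter> Sh F h)"
      proof
        fix h assume h: "h \<in> {1..H}"
        show "card (Z1 \<inter> Sh F h) \<le> card (X \<inter> Sh F h)"
        proof (cases "Z1 \<inter> Sh F h = {}")
          case False
          then obtain q where q: "q \<in> Z1" "q \<in> Sh F h" by blast
          have nf: "\<not> feasible F H M (insert q X)" and qO: "q \<in> Opt" "q \<notin> X" using q unfolding Z1_def by auto
          have "insert q X \<subseteq> Sset F H" using qO OptS XS by auto
          then obtain h' where h': "h' \<in> {1..H}" "card (insert q X \<inter> Sh F h') > M"
            using nf unfolding feasible_def by (meson not_le)
          have hh: "h' = h"
          proof (rule ccontr)
            assume "h' \<noteq> h"
            then have "q \<notin> Sh F h'" using q(2) unfolding Sh_def by auto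
            then have "insert q X \<inter> Sh F h' = X \<inter> Sh F h'" by auto
            moreover have "card (X \<inter> Sh F h') \<le> M" using h'(1) feasX unfolding feasible_def by blast
            ultimately show False using h'(2) by simp
          qed
          have "card (insert q X \<inter> Sh F h) = card (X \<inter> Sh F h) + 1"
            using q(2) qO finX by (simp add: Int_insert_left)
          then have "card (X \<inter> Sh F h) \<ge> M" using h'(2) unfolding hh by linarith
          moreover have "card (Z1 \<inter> Sh F h) \<le> card (Opt \<inter> Sh F h)"
            using finOpt unfolding Z1_def by (intro card_mono) auto
          moreover have "card (Opt \<inter> Sh F h) \<le> M" using feasOpt h unfolding feasible_def by blast
          ultimately show ?thesis by linarith
        qed simp
      qed
      have s1: "(\<Sum>z\<in>Z1. gain G X z) \<le> G X - G {}" using inv Z1S cZ1 by blast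
      have s2: "(\<Sum>z\<in>Z2. gain G X z) \<le> 0"
      proof (rule sum_nonpos)
        fix z assume z: "z \<in> Z2"
        let ?C = "cand (Sset F H) (feasible F H M) X"
        have zC: "z \<in> ?C" using z OptS unfolding Z2_def cand_def by auto
        then have "maxgain (Sset F H) (feasible F H M) G X = 0" using St unfolding greedy_stop_def by auto
        moreover have "gain G X z \<le> maxgain (Sset F H) (feasible F H M) G X"
          unfolding maxgain_def using zC finite_Sset by (intro Max_ge) (auto simp: cand_def)
        ultimately show "gain G X z \<le> 0" by simp
      qed
      have "G Opt \<le> G (X \<union> (Opt - X))" using mono[of Opt "X \<union> (Opt - X)"] OptS XS by auto
      also have "\<dots> \<le> G X + (\<Sum>z\<in>Opt - X. gain G X z)"
        using subadd[OF sub XS, of "Opt - X"] finOpt OptS by auto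
      also have "(\<Sum>z\<in>Opt - X. gain G X z) = (\<Sum>z\<in>Z1. gain G X z) + (\<Sum>z\<in>Z2. gain G X z)"
        unfolding U(1) using fZ1 U(2) by (simp add: sum.union_disjoint)
      finally show ?thesis using s1 s2 G0 by linarith
    qed
    have finF: "finite {Y. feasible F H M Y}"
    proof -
      have "{Y. feasible F H M Y} \<subseteq> Pow (Sset F H)" unfolding feasible_def by auto
      then show ?thesis using finite_Sset finite_subset by blast
    qed
    have "Max (G ` {Y. feasible F H M Y}) \<le> 2 * G X"
      using finF feasX bound by (subst Max_le_iff) auto
    then show "feasible F H M X \<and> G X \<ge> 1/2 * Max (G ` {Y. feasible F H M Y})"
      using feasX by simp
  qed
qed

theorem mainTheorem4:
  fixes H U F M :: nat
    and P :: "nat \<Rightarrow> real"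
    and E :: "(nat \<times> nat) set"
    and \<omega> :: "nat \<Rightarrow> nat \<Rightarrow> real"
    and \<omega>inf :: real
    and ord :: "nat \<Rightarrow> nat \<Rightarrow> nat"
  assumes P_nonneg: "\<forall>f\<in>{1..F}. P f \<ge> 0"
    and P_sum: "(\<Sum>f=1..F. P f) = 1"
    and E_sub: "E \<subseteq> {0..H} \<times> {1..U}"
    and E_base: "\<forall>u\<in>{1..U}. (0, u) \<in> E"
    and \<omega>_nonneg: "\<forall>h\<in>{0..H}. \<forall>u\<in>{1..U}. \<omega> h u \<ge> 0"
    and \<omega>_base: "\<forall>(h, u)\<in>E. \<omega> 0 u \<ge> \<omega> h u"
    and \<omega>_inf: "\<forall>h\<in>{0..H}. \<forall>u\<in>{1..U}. (h, u) \<notin> E \<longrightarrow> \<omega> h u = \<omega>inf"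
    and \<omega>_inf_large: "\<forall>u\<in>{1..U}. \<omega>inf > \<omega> 0 u"
    and ord_bij: "\<forall>u\<in>{1..U}. bij_betw (ord u) {1..card (Hs E u)} (Hs E u)"
    and ord_sorted: "\<forall>u\<in>{1..U}. \<forall>i\<in>{1..card (Hs E u)}. \<forall>j\<in>{1..card (Hs E u)}.
                        i \<le> j \<longrightarrow> \<omega> (ord u i) u \<le> \<omega> (ord u j) u"
    and ord_last: "\<forall>u\<in>{1..U}. ord u (card (Hs E u)) = 0"
  shows "(\<exists>X. greedy_output (Sset F H) (feasible F H M) (Gval U E F P \<omega> ord) X)
       \<and> (\<forall>X. greedy_output (Sset F H) (feasible F H M) (Gval U E F P \<omega> ord) X \<longrightarrow>
            feasible F H M X \<and>
            Gval U E F P \<omega> ord X \<ge> 1/2 * Max (Gval U E F P \<omega> ord ` {Y. feasible F H M Y}))"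
proof -
  let ?G = "Gval U E F P \<omega> ord"
  let ?Gc = "\<lambda>X. (\<Sum>u=1..U. \<Sum>f=1..F. P f * mx (aw E \<omega> u f) X)"
  have Geq: "finite X \<Longrightarrow> ?G X = ?Gc X" for X
    using Gval_eq[OF P_sum E_sub E_base ord_bij ord_sorted ord_last] by blast
  have mono: "?G A \<le> ?G B" if "A \<subseteq> B" "B \<subseteq> Sset F H" for A B
  proof -
    have fB: "finite B" using that finite_Sset finite_subset by blast
    have fA: "finite A" using fB that finite_subset by blast
    have "?Gc A \<le> ?Gc B"
      using P_nonneg mx_mono[OF fB that(1)]
      by (intro sum_mono mult_left_mono) auto
    then show ?thesis using Geq fA fB by simp
  qed
  have sub: "gain ?G B e \<le> gain ?G A e" if "A \<subseteq> B" "B \<subseteq> Sset F H" for A B e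
  proof -
    have fB: "finite B" using that finite_Sset finite_subset by blast
    have fA: "finite A" using fB that finite_subset by blast
    have gB: "gain ?G B e = (\<Sum>u=1..U. \<Sum>f=1..F. P f * (mx (aw E \<omega> u f) (insert e B) - mx (aw E \<omega> u f) B))"
      unfolding gain_def using Geq fB by (simp add: sum_subtractf right_diff_distrib)
    have gA: "gain ?G A e = (\<Sum>u=1..U. \<Sum>f=1..F. P f * (mx (aw E \<omega> u f) (insert e A) - mx (aw E \<omega> u f) A))"
      unfolding gain_def using Geq fA by (simp add: sum_subtractf right_diff_distrib)
    show ?thesis unfolding gA gB
      using P_nonneg mx_sub[OF fB that(1)]
      by (intro sum_mono mult_left_mono) auto
  qed
  have G0: "?G {} = 0" using Geq[of "{}"] by (simp add: mx_empty)
  show ?thesis using greedy_half[where G="?G" and M=M, OF mono sub G0] by blast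
qed

end
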